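(* Let $\pi$ be a set of primes, $G$ a finite group with the property $C_\pi$, $A$ a normal subgroup of $G$ and $H$ a $\pi$-Hall subgroup of $G$. Then both $N_G(HA)$ and $N_G(H\cap A)$ have the property $C_\pi$.
   Context: All groups are finite. A subgroup $H$ of $G$ is a $\pi$-Hall subgroup if all prime divisors of $|H|$ lie in $\pi$ and no prime divisor of $|G:H|$ lies in $\pi$. $G$ has the property $E_\pi$ if it contains a $\pi$-Hall subgroup; $G$ has the property $C_\pi$ if it has $E_\pi$ and any two $\pi$-Hall subgroups of $G$ are conjugate in $G$. *)

theory Defs
  imports "HOL-Algebra.Algebra" "HOL-Computational_Algebra.Primes"
begin

definition pi_Hall :: "nat set \<Rightarrow> ('a, 'b) monoid_scheme \<Rightarrow> 'a set \<Rightarrow> bool" where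
  "pi_Hall \<pi> G H \<longleftrightarrow> subgroup H G
     \<and> (\<forall>p. Factorial_Ring.prime p \<and> p dvd card H \<longrightarrow> p \<in> \<pi>)
     \<and> (\<forall>p. Factorial_Ring.prime p \<and> p dvd card (rcosets\<^bsub>G\<^esub> H) \<longrightarrow> p \<notin> \<pi>)"

definition has_E_pi :: "nat set \<Rightarrow> ('a, 'b) monoid_scheme \<Rightarrow> bool" where
  "has_E_pi \<pi> G \<longleftrightarrow> (\<exists>H. pi_Hall \<pi> G H)"

definition has_C_pi :: "nat set \<Rightarrow> ('a, 'b) monoid_scheme \<Rightarrow> bool" where
  "has_C_pi \<pi> G \<longleftrightarrow> has_E_pi \<pi> G
     \<and> (\<forall>H K. pi_Hall \<pi> G H \<and> pi_Hall \<pi> G K \<longrightarrow>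
          (\<exists>g\<in>carrier G. K = g <#\<^bsub>G\<^esub> H #>\<^bsub>G\<^esub> inv\<^bsub>G\<^esub> g))"

end

theory Submission
  imports Defs
begin

definition pinum :: "nat set \<Rightarrow> nat \<Rightarrow> bool" where
  "pinum \<pi> n \<longleftrightarrow> (\<forall>p. Factorial_Ring.prime p \<and> p dvd n \<longrightarrow> p \<in> \<pi>)"
definition copinum :: "nat set \<Rightarrow> nat \<Rightarrow> bool" where
  "copinum \<pi> n \<longleftrightarrow> (\<forall>p. Factorial_Ring.prime p \<and> p dvd n \<longrightarrow> p \<notin> \<pi>)"

lemma pinum_copinum_coprime:
  assumes "pinum \<pi> a" "copinum \<pi> b" shows "coprime a b"
proof (rule ccontr)
  assume "\<not> coprime a b"
  then have "gcd a b \<noteq> 1" by (simp add: coprime_iff_gcd_eq_1)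
  then obtain p where "Factorial_Ring.prime p" "p dvd gcd a b" using prime_factor_nat by blast
  then show False using assms unfolding pinum_def copinum_def by auto
qed

lemma (in group) L1:
  assumes fin: "finite (carrier G)" and H: "pi_Hall \<pi> G H" and L: "subgroup L G"
    and pL: "pinum \<pi> (card L)"
  shows "card L \<le> card H"
proof -
  have sH: "subgroup H G" using H unfolding pi_Hall_def by auto
  have cp: "copinum \<pi> (card (rcosets H))" using H unfolding pi_Hall_def copinum_def by auto
  have "card L dvd order G" using lagrange[OF L] by (metis dvd_triv_right)
  also have "order G = card (rcosets H) * card H" using lagrange[OF sH] by simp
  finally have "card L dvd card (rcosets H) * card H" .
  moreover have "coprime (card L) (card (rcosets H))" using pinum_copinum_coprime[OF pL cp] .
  ultimately have "card L dvd card H" by (simp add: coprime_dvd_mult_right_iff)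
  moreover have "card H > 0" using sH fin subgroup.one_closed
    by (metis card_gt_0_iff empty_iff finite_subset subgroup.subset)
  ultimately show ?thesis by (simp add: dvd_imp_le)
qed

lemma (in group) LD:
  assumes fin: "finite (carrier G)" and H: "subgroup H G" and P: "subgroup P G" and HP: "H \<subseteq> P"
  shows "card (rcosets\<^bsub>G\<lparr>carrier := P\<rparr>\<^esub> H) * card H = card P"
    and "card (rcosets H) = card (rcosets\<^bsub>G\<lparr>carrier := P\<rparr>\<^esub> H) * card (rcosets P)"
proof -
  interpret P: group "G\<lparr>carrier := P\<rparr>" using subgroup_imp_group[OF P] .
  have "subgroup H (G\<lparr>carrier := P\<rparr>)" using subgroup_incl[OF H P HP] .
  from P.lagrange[OF this] show 1: "card (rcosets\<^bsub>G\<lparr>carrier := P\<rparr>\<^esub> H) * card H = card P"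
    by (simp add: order_def)
  have "card H > 0" using H fin subgroup.one_closed
    by (metis card_gt_0_iff empty_iff finite_subset subgroup.subset)
  have "card (rcosets H) * card H = card (rcosets P) * card P"
    using lagrange[OF H] lagrange[OF P] by simp
  also have "\<dots> = (card (rcosets\<^bsub>G\<lparr>carrier := P\<rparr>\<^esub> H) * card (rcosets P)) * card H"
    using 1 by (simp add: algebra_simps flip: 1)
  finally show "card (rcosets H) = card (rcosets\<^bsub>G\<lparr>carrier := P\<rparr>\<^esub> H) * card (rcosets P)"
    using \<open>card H > 0\<close> by simp
qed

lemma (in group) L3:
  assumes fin: "finite (carrier G)" and H: "pi_Hall \<pi> G H" and M: "subgroup M G" and HM: "H \<subseteq> M"
  shows "pi_Hall \<pi> (G\<lparr>carrier := M\<rparr>) H"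
proof -
  have sH: "subgroup H G" using H unfolding pi_Hall_def by auto
  show ?thesis unfolding pi_Hall_def
  proof (intro conjI allI impI)
    show "subgroup H (G\<lparr>carrier := M\<rparr>)" using subgroup_incl[OF sH M HM] .
    show "\<And>p. Factorial_Ring.prime p \<and> p dvd card H \<Longrightarrow> p \<in> \<pi>" using H unfolding pi_Hall_def by auto
    fix p assume p: "Factorial_Ring.prime p \<and> p dvd card (rcosets\<^bsub>G\<lparr>carrier := M\<rparr>\<^esub> H)"
    then have "p dvd card (rcosets H)" using LD(2)[OF fin sH M HM] by simp
    then show "p \<notin> \<pi>" using H p unfolding pi_Hall_def by auto
  qed
qed

lemma (in group) L2:
  assumes fin: "finite (carrier G)" and H: "pi_Hall \<pi> G H" and K: "subgroup K G" and c: "card K = card H"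
  shows "pi_Hall \<pi> G K"
proof -
  have sH: "subgroup H G" using H unfolding pi_Hall_def by auto
  have "card H > 0" using sH fin subgroup.one_closed
    by (metis card_gt_0_iff empty_iff finite_subset subgroup.subset)
  have "card (rcosets K) * card H = card (rcosets H) * card H"
    using lagrange[OF K] lagrange[OF sH] c by simp
  then have "card (rcosets K) = card (rcosets H)" using \<open>card H > 0\<close> by simp
  then show ?thesis using H K c unfolding pi_Hall_def by auto
qed

lemma (in group) conj_img:
  assumes "g \<in> carrier G" "S \<subseteq> carrier G"
  shows "g <# S #> inv g = (\<lambda>x. g \<otimes> x \<otimes> inv g) ` S"
  unfolding l_coset_def r_coset_def by auto

lemma (in group) card_conj:
  assumes "g \<in> carrier G" "S \<subseteq> carrier G"
  shows "card ((\<lambda>x. g \<otimes> x \<otimes> inv g) ` S) = card S"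
proof (rule card_image)
  show "inj_on (\<lambda>x. g \<otimes> x \<otimes> inv g) S"
    using assms conjugation_is_inj unfolding inj_on_def by (meson subsetD)
qed

lemma (in group) norm_mem:
  assumes fin: "finite (carrier G)" and Y: "Y \<subseteq> carrier G" and g: "g \<in> carrier G"
    and sub: "(\<lambda>x. g \<otimes> x \<otimes> inv g) ` Y \<subseteq> Y"
  shows "g \<in> normalizer G Y"
proof -
  have "finite Y" using fin Y finite_subset by blast
  have "(\<lambda>x. g \<otimes> x \<otimes> inv g) ` Y = Y"
    using card_subset_eq[OF \<open>finite Y\<close> sub] card_conj[OF g Y] by simp
  then show ?thesis unfolding normalizer_def stabilizer_def using g Y conj_img[OF g Y] by simp
qed

lemma (in group) norm_sub:
  assumes "g \<in> normalizer G Y" shows "g \<in> carrier G"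
  using assms unfolding normalizer_def stabilizer_def by auto


lemma (in group) canc1: "x \<in> carrier G \<Longrightarrow> y \<in> carrier G \<Longrightarrow> inv x \<otimes> (x \<otimes> y) = y"
  by (simp add: m_assoc[symmetric])
lemma (in group) canc2: "x \<in> carrier G \<Longrightarrow> y \<in> carrier G \<Longrightarrow> x \<otimes> (inv x \<otimes> y) = y"
  by (simp add: m_assoc[symmetric])

lemma (in group) PF:
  assumes fin: "finite (carrier G)" and N: "subgroup N G" and K: "subgroup K G"
    and KN: "K \<subseteq> normalizer G N"
  shows "subgroup (N <#> K) G" and "card (N <#> K) * card (K \<inter> N) = card N * card K"
proof -
  have NG: "N \<subseteq> carrier G" using N subgroup.subset by blast
  have sNo: "subgroup (normalizer G N) G" using normalizer_imp_subgroup[OF NG] .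
  have KMo: "subgroup K (G\<lparr>carrier := normalizer G N\<rparr>)" using subgroup_incl[OF K sNo KN] .
  have nN: "N \<lhd> G\<lparr>carrier := normalizer G N\<rparr>" using subgroup_in_normalizer[OF N] .
  have "subgroup (N <#> K) (G\<lparr>carrier := normalizer G N\<rparr>)"
    using mult_norm_sub_in_sub[OF nN KMo sNo] .
  then show NK: "subgroup (N <#> K) G" using incl_subgroup[OF sNo] by blast
  have iso: "(G\<lparr>carrier:= N<#>K\<rparr> Mod N) \<cong> (G\<lparr>carrier:= K\<rparr> Mod (K\<inter>N))"
    using snd_iso_thme[OF K N KMo] .
  have eq: "card (rcosets\<^bsub>G\<lparr>carrier:= N<#>K\<rparr>\<^esub> N) = card (rcosets\<^bsub>G\<lparr>carrier:= K\<rparr>\<^esub> (K\<inter>N))"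
    using iso_same_card[OF iso] by (simp add: FactGroup_def)
  have "N \<subseteq> N <#> K"
  proof
    fix n assume "n \<in> N"
    then have "n \<otimes> \<one> \<in> N <#> K" unfolding set_mult_def using subgroup.one_closed[OF K] by blast
    then show "n \<in> N <#> K" using \<open>n \<in> N\<close> NG by auto
  qed
  have KNs: "subgroup (K \<inter> N) G" using subgroups_Inter_pair[OF K N] .
  have l1: "card (rcosets\<^bsub>G\<lparr>carrier:= N<#>K\<rparr>\<^esub> N) * card N = card (N <#> K)"
    using LD(1)[OF fin N NK \<open>N \<subseteq> N <#> K\<close>] .
  have l2: "card (rcosets\<^bsub>G\<lparr>carrier:= K\<rparr>\<^esub> (K\<inter>N)) * card (K \<inter> N) = card K"
    using LD(1)[OF fin KNs K] by (meson Int_lower1)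
  have c1: "card (N <#> K) = card (rcosets\<^bsub>G\<lparr>carrier:= K\<rparr>\<^esub> (K\<inter>N)) * card N"
    using l1 eq by simp
  show "card (N <#> K) * card (K \<inter> N) = card N * card K"
    unfolding c1 l2[symmetric] by (simp add: mult.assoc mult.commute mult.left_commute)
qed

lemma (in group) core:
  assumes fin: "finite (carrier G)" and C: "has_C_pi \<pi> G" and H: "pi_Hall \<pi> G H"
    and M: "subgroup M G" and HM: "H \<subseteq> M"
    and Q: "\<And>g. g \<in> carrier G \<Longrightarrow> (\<lambda>x. g \<otimes> x \<otimes> inv g) ` H \<subseteq> M \<Longrightarrow> g \<in> M"
  shows "has_C_pi \<pi> (G\<lparr>carrier := M\<rparr>)"
proof -
  interpret Mg: group "G\<lparr>carrier := M\<rparr>" using subgroup_imp_group[OF M] .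
  have finM: "finite (carrier (G\<lparr>carrier := M\<rparr>))" using finite_subset[OF subgroup.subset[OF M] fin] by simp
  have sH: "subgroup H G" using H unfolding pi_Hall_def by auto
  have HGM: "H \<subseteq> carrier G" using sH subgroup.subset by blast
  have HM': "pi_Hall \<pi> (G\<lparr>carrier := M\<rparr>) H" using L3[OF fin H M HM] .
  have key: "\<exists>g\<in>M. K = (\<lambda>x. g \<otimes> x \<otimes> inv g) ` H" if K: "pi_Hall \<pi> (G\<lparr>carrier := M\<rparr>) K" for K
  proof -
    have sKM: "subgroup K (G\<lparr>carrier := M\<rparr>)" using K unfolding pi_Hall_def by auto
    have sK: "subgroup K G" using incl_subgroup[OF M sKM] .
    have KM: "K \<subseteq> M" using subgroup.subset[OF sKM] by simp
    have "card K \<le> card H"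
      using L1[OF fin H sK] K unfolding pi_Hall_def pinum_def by auto
    moreover have "card H \<le> card K"
      using Mg.L1[OF finM K] HM' unfolding pi_Hall_def pinum_def by auto
    ultimately have "card K = card H" by simp
    then have "pi_Hall \<pi> G K" using L2[OF fin H sK] by simp
    then obtain g where g: "g \<in> carrier G" and "K = g <# H #> inv g"
      using C H unfolding has_C_pi_def by blast
    then have Kg: "K = (\<lambda>x. g \<otimes> x \<otimes> inv g) ` H" using conj_img[OF g HGM] by simp
    then have "g \<in> M" using Q[OF g] KM by simp
    then show ?thesis using Kg by blast
  qed
  show ?thesis unfolding has_C_pi_def has_E_pi_def
  proof (intro conjI allI impI)
    show "\<exists>H. pi_Hall \<pi> (G\<lparr>carrier := M\<rparr>) H" using HM' by blast
    fix K1 K2 assume "pi_Hall \<pi> (G\<lparr>carrier := M\<rparr>) K1 \<and> pi_Hall \<pi> (G\<lparr>carrier := M\<rparr>) K2"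
    then obtain g1 g2 where g1: "g1 \<in> M" "K1 = (\<lambda>x. g1 \<otimes> x \<otimes> inv g1) ` H"
      and g2: "g2 \<in> M" "K2 = (\<lambda>x. g2 \<otimes> x \<otimes> inv g2) ` H" using key by blast
    have g1G: "g1 \<in> carrier G" and g2G: "g2 \<in> carrier G" using g1 g2 M subgroup.subset by blast+
    define g where "g = g2 \<otimes> inv g1"
    have gM: "g \<in> M" unfolding g_def using g1 g2 M by (simp add: subgroup.m_closed subgroup.m_inv_closed)
    have gG: "g \<in> carrier G" using g1G g2G g_def by simp
    have K1G: "K1 \<subseteq> carrier G" using g1 g1G HGM by auto
    have "g <#\<^bsub>G\<lparr>carrier := M\<rparr>\<^esub> K1 #>\<^bsub>G\<lparr>carrier := M\<rparr>\<^esub> inv\<^bsub>G\<lparr>carrier := M\<rparr>\<^esub> g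
        = g <# K1 #> inv g"
      using m_inv_consistent[OF M gM] unfolding l_coset_def r_coset_def by simp
    also have "\<dots> = (\<lambda>x. g \<otimes> x \<otimes> inv g) ` K1" using conj_img[OF gG K1G] .
    also have "\<dots> = (\<lambda>x. g \<otimes> (g1 \<otimes> x \<otimes> inv g1) \<otimes> inv g) ` H" using g1 by (simp add: image_image)
    also have "\<dots> = K2"
    proof -
      have "g \<otimes> (g1 \<otimes> x \<otimes> inv g1) \<otimes> inv g = g2 \<otimes> x \<otimes> inv g2" if "x \<in> H" for x
      proof -
        have x: "x \<in> carrier G" using that HGM by blast
        show ?thesis unfolding g_def using g1G g2G x by (simp add: m_assoc inv_mult_group canc1 canc2)
      qed
      then show ?thesis using g2 by (auto simp: image_def)
    qed
    finally show "\<exists>g\<in>carrier (G\<lparr>carrier := M\<rparr>). K2 = g <#\<^bsub>G\<lparr>carrier := M\<rparr>\<^esub> K1 #>\<^bsub>G\<lparr>carrier := M\<rparr>\<^esub> inv\<^bsub>G\<lparr>carrier := M\<rparr>\<^esub> g"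
      using gM by auto
  qed
qed


lemma (in group) case1:
  assumes fin: "finite (carrier G)" and H: "pi_Hall \<pi> G H" and A: "A \<lhd> G"
  shows "subgroup (normalizer G (H <#> A)) G" and "H \<subseteq> normalizer G (H <#> A)"
    and "\<And>g. g \<in> carrier G \<Longrightarrow> (\<lambda>x. g \<otimes> x \<otimes> inv g) ` H \<subseteq> normalizer G (H <#> A)
            \<Longrightarrow> g \<in> normalizer G (H <#> A)"
proof -
  have sH: "subgroup H G" using H unfolding pi_Hall_def by auto
  have sA: "subgroup A G" using A normal_imp_subgroup by blast
  have HG: "H \<subseteq> carrier G" and AG: "A \<subseteq> carrier G" using sH sA subgroup.subset by blast+
  have sY: "subgroup (H <#> A) G" using mult_norm_subgroup[OF A sH] commut_normal[OF sH A] by simp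
  have YG: "H <#> A \<subseteq> carrier G" using sY subgroup.subset by blast
  show "subgroup (normalizer G (H <#> A)) G" using normalizer_imp_subgroup[OF YG] .
  have HY: "H \<subseteq> H <#> A"
  proof
    fix h assume h: "h \<in> H"
    then have "h \<otimes> \<one> \<in> H <#> A" unfolding set_mult_def using subgroup.one_closed[OF sA] by blast
    then show "h \<in> H <#> A" using h HG by auto
  qed
  have AY: "A \<subseteq> H <#> A"
  proof
    fix a assume a: "a \<in> A"
    then have "\<one> \<otimes> a \<in> H <#> A" unfolding set_mult_def using subgroup.one_closed[OF sH] by blast
    then show "a \<in> H <#> A" using a AG by auto
  qed
  have crit: "g \<in> normalizer G (H <#> A)" if g: "g \<in> carrier G" and sub: "(\<lambda>x. g \<otimes> x \<otimes> inv g) ` H \<subseteq> H <#> A" for g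
  proof (rule norm_mem[OF fin YG g])
    show "(\<lambda>x. g \<otimes> x \<otimes> inv g) ` (H <#> A) \<subseteq> H <#> A"
    proof
      fix y assume "y \<in> (\<lambda>x. g \<otimes> x \<otimes> inv g) ` (H <#> A)"
      then obtain h a where h: "h \<in> H" and a: "a \<in> A" and y: "y = g \<otimes> (h \<otimes> a) \<otimes> inv g"
        unfolding set_mult_def by blast
      have hG: "h \<in> carrier G" and aG: "a \<in> carrier G" using h a HG AG by auto
      have "y = (g \<otimes> h \<otimes> inv g) \<otimes> (g \<otimes> a \<otimes> inv g)" using y g hG aG by (simp add: m_assoc canc1)
      moreover have "g \<otimes> h \<otimes> inv g \<in> H <#> A" using sub h by blast
      moreover have "g \<otimes> a \<otimes> inv g \<in> H <#> A" using AY normal.inv_op_closed2[OF A g a] by blast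
      ultimately show "y \<in> H <#> A" using subgroup.m_closed[OF sY] by simp
    qed
  qed
  show "H \<subseteq> normalizer G (H <#> A)"
  proof
    fix h assume h: "h \<in> H"
    have hG: "h \<in> carrier G" using h HG by auto
    have "(\<lambda>x. h \<otimes> x \<otimes> inv h) ` H \<subseteq> H"
      using h sH by (auto simp: subgroup.m_closed subgroup.m_inv_closed)
    then show "h \<in> normalizer G (H <#> A)" using crit[OF hG] HY by blast
  qed
  fix g assume g: "g \<in> carrier G" and sub: "(\<lambda>x. g \<otimes> x \<otimes> inv g) ` H \<subseteq> normalizer G (H <#> A)"
  define K where "K = (\<lambda>x. g \<otimes> x \<otimes> inv g) ` H"
  have sK: "subgroup K G" unfolding K_def using subgroup_conjugation_is_surj2[OF g sH] conj_img[OF g HG] by simp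
  have cK: "card K = card H" unfolding K_def using card_conj[OF g HG] .
  have KN: "K \<subseteq> normalizer G (H <#> A)" using sub K_def by simp
  note P = PF[OF fin sY sK KN]
  define c where "c = card (K \<inter> (H <#> A))"
  have YP: "H <#> A \<subseteq> (H <#> A) <#> K"
  proof
    fix y assume y: "y \<in> H <#> A"
    then have "y \<otimes> \<one> \<in> (H <#> A) <#> K" unfolding set_mult_def using subgroup.one_closed[OF sK] by blast
    then show "y \<in> (H <#> A) <#> K" using y YG by auto
  qed
  have HP: "H \<subseteq> (H <#> A) <#> K" using HY YP by blast
  have l1: "card (rcosets\<^bsub>G\<lparr>carrier := (H <#> A) <#> K\<rparr>\<^esub> H) * card H = card ((H <#> A) <#> K)"
    and l2: "card (rcosets H) = card (rcosets\<^bsub>G\<lparr>carrier := (H <#> A) <#> K\<rparr>\<^esub> H) * card (rcosets ((H <#> A) <#> K))"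
    using LD[OF fin sH P(1) HP] by auto
  have l3: "card (rcosets\<^bsub>G\<lparr>carrier := H <#> A\<rparr>\<^esub> H) * card H = card (H <#> A)"
    using LD(1)[OF fin sH sY HY] .
  define iP where "iP = card (rcosets\<^bsub>G\<lparr>carrier := (H <#> A) <#> K\<rparr>\<^esub> H)"
  define iY where "iY = card (rcosets\<^bsub>G\<lparr>carrier := H <#> A\<rparr>\<^esub> H)"
  have hpos: "card H > 0" using sH fin subgroup.one_closed
    by (metis card_gt_0_iff empty_iff finite_subset subgroup.subset)
  have "iP * card H * c = iY * card H * card H"
    using P(2) l1 l3 cK unfolding iP_def iY_def c_def by simp
  then have eq: "iP * c = iY * card H" using hpos by (simp add: mult.commute mult.left_commute)
  have "copinum \<pi> iP"
    using H l2 unfolding iP_def copinum_def pi_Hall_def by (metis dvd_mult2 dvd_triv_left)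
  moreover have "pinum \<pi> (card H)" using H unfolding pinum_def pi_Hall_def by auto
  ultimately have "coprime (card H) iP" using pinum_copinum_coprime by blast
  moreover have "card H dvd iP * c" using eq by simp
  ultimately have "card H dvd c" by (simp add: coprime_dvd_mult_right_iff)
  moreover have "c \<le> card H"
  proof -
    have "finite K" using sK fin subgroup.subset finite_subset by blast
    then show ?thesis unfolding c_def using cK by (metis card_mono inf_le1)
  qed
  moreover have "c > 0"
  proof -
    have "finite K" using sK fin subgroup.subset finite_subset by blast
    moreover have "\<one> \<in> K \<inter> (H <#> A)" using subgroup.one_closed[OF sK] subgroup.one_closed[OF sY] by blast
    ultimately show ?thesis unfolding c_def by (metis card_gt_0_iff empty_iff finite_Int)
  qed
  ultimately have "c = card K" using cK by (simp add: dvd_imp_le le_antisym)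
  moreover have "finite K" using sK fin subgroup.subset finite_subset by blast
  ultimately have "K \<inter> (H <#> A) = K" unfolding c_def by (metis card_subset_eq inf_le1)
  then have "K \<subseteq> H <#> A" by blast
  then show "g \<in> normalizer G (H <#> A)" using crit[OF g] K_def by simp
qed

lemma (in group) case2:
  assumes fin: "finite (carrier G)" and H: "pi_Hall \<pi> G H" and A: "A \<lhd> G"
  shows "subgroup (normalizer G (H \<inter> A)) G" and "H \<subseteq> normalizer G (H \<inter> A)"
    and "\<And>g. g \<in> carrier G \<Longrightarrow> (\<lambda>x. g \<otimes> x \<otimes> inv g) ` H \<subseteq> normalizer G (H \<inter> A)
            \<Longrightarrow> g \<in> normalizer G (H \<inter> A)"
proof -
  have sH: "subgroup H G" using H unfolding pi_Hall_def by auto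
  have sA: "subgroup A G" using A normal_imp_subgroup by blast
  have HG: "H \<subseteq> carrier G" and AG: "A \<subseteq> carrier G" using sH sA subgroup.subset by blast+
  have sD: "subgroup (H \<inter> A) G" using subgroups_Inter_pair[OF sH sA] .
  have DG: "H \<inter> A \<subseteq> carrier G" using HG by blast
  show "subgroup (normalizer G (H \<inter> A)) G" using normalizer_imp_subgroup[OF DG] .
  show "H \<subseteq> normalizer G (H \<inter> A)"
  proof
    fix h assume h: "h \<in> H"
    have hG: "h \<in> carrier G" using h HG by auto
    have "(\<lambda>x. h \<otimes> x \<otimes> inv h) ` (H \<inter> A) \<subseteq> H \<inter> A"
      using h sH normal.inv_op_closed2[OF A hG]
      by (auto simp: subgroup.m_closed subgroup.m_inv_closed)
    then show "h \<in> normalizer G (H \<inter> A)" using norm_mem[OF fin DG hG] by blast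
  qed
  fix g assume g: "g \<in> carrier G" and sub: "(\<lambda>x. g \<otimes> x \<otimes> inv g) ` H \<subseteq> normalizer G (H \<inter> A)"
  define K where "K = (\<lambda>x. g \<otimes> x \<otimes> inv g) ` H"
  have sK: "subgroup K G" unfolding K_def using subgroup_conjugation_is_surj2[OF g sH] conj_img[OF g HG] by simp
  have cK: "card K = card H" unfolding K_def using card_conj[OF g HG] .
  have KN: "K \<subseteq> normalizer G (H \<inter> A)" using sub K_def by simp
  note P = PF[OF fin sD sK KN]
  have hpos: "card H > 0" using sH fin subgroup.one_closed
    by (metis card_gt_0_iff empty_iff finite_subset subgroup.subset)
  have dD: "card (H \<inter> A) dvd card H"
    using LD(1)[OF fin sD sH] by (metis Int_lower1 dvd_triv_right)
  have "pinum \<pi> (card ((H \<inter> A) <#> K))"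
    unfolding pinum_def
  proof (intro allI impI)
    fix p assume p: "Factorial_Ring.prime p \<and> p dvd card ((H \<inter> A) <#> K)"
    then have "p dvd card (H \<inter> A) * card K" using P(2) by (metis dvd_mult2)
    then have "p dvd card (H \<inter> A) \<or> p dvd card H" using p cK by (simp add: prime_dvd_mult_iff)
    then have "p dvd card H" using dD dvd_trans by blast
    then show "p \<in> \<pi>" using H p unfolding pi_Hall_def by auto
  qed
  then have le: "card ((H \<inter> A) <#> K) \<le> card K" using L1[OF fin H P(1)] cK by simp
  have KP: "K \<subseteq> (H \<inter> A) <#> K"
  proof
    fix k assume k: "k \<in> K"
    then have "\<one> \<otimes> k \<in> (H \<inter> A) <#> K" unfolding set_mult_def using subgroup.one_closed[OF sD] by blast
    then show "k \<in> (H \<inter> A) <#> K" using k sK subgroup.subset by force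
  qed
  have finP: "finite ((H \<inter> A) <#> K)" using P(1) fin subgroup.subset finite_subset by blast
  have "card K \<le> card ((H \<inter> A) <#> K)" using card_mono[OF finP KP] .
  then have "card ((H \<inter> A) <#> K) = card K" using le by simp
  then have "card (K \<inter> (H \<inter> A)) = card (H \<inter> A)" using P(2) cK hpos by simp
  moreover have "finite (H \<inter> A)" using DG fin finite_subset by blast
  ultimately have "K \<inter> (H \<inter> A) = H \<inter> A" by (metis card_subset_eq inf_le2)
  then have DK: "H \<inter> A \<subseteq> K" by blast
  have "H \<inter> A \<subseteq> (\<lambda>x. g \<otimes> x \<otimes> inv g) ` (H \<inter> A)"
  proof
    fix d assume d: "d \<in> H \<inter> A"
    then obtain h where h: "h \<in> H" and dh: "d = g \<otimes> h \<otimes> inv g" using DK K_def by blast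
    have hG: "h \<in> carrier G" using h HG by blast
    have "inv g \<otimes> d \<otimes> g \<in> A" using normal.inv_op_closed1[OF A g] d by simp
    moreover have "inv g \<otimes> d \<otimes> g = h" using dh g hG by (simp add: m_assoc canc1)
    ultimately have "h \<in> H \<inter> A" using h by simp
    then show "d \<in> (\<lambda>x. g \<otimes> x \<otimes> inv g) ` (H \<inter> A)" using dh by blast
  qed
  moreover have "finite ((\<lambda>x. g \<otimes> x \<otimes> inv g) ` (H \<inter> A))" using \<open>finite (H \<inter> A)\<close> by simp
  ultimately have "(\<lambda>x. g \<otimes> x \<otimes> inv g) ` (H \<inter> A) = H \<inter> A"
    using card_conj[OF g DG] by (metis card_subset_eq)
  then show "g \<in> normalizer G (H \<inter> A)" using norm_mem[OF fin DG g] by simp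
qed

theorem lemma5:
  fixes G :: "('a, 'b) monoid_scheme" and \<pi> :: "nat set" and A H :: "'a set"
  assumes "group G" and "finite (carrier G)"
    and "\<forall>p\<in>\<pi>. Factorial_Ring.prime p"
    and "has_C_pi \<pi> G"
    and "A \<lhd> G"
    and "pi_Hall \<pi> G H"
  shows "has_C_pi \<pi> (G\<lparr>carrier := normalizer G (H <#>\<^bsub>G\<^esub> A)\<rparr>)
       \<and> has_C_pi \<pi> (G\<lparr>carrier := normalizer G (H \<inter> A)\<rparr>)"
proof
  interpret group G by fact
  show "has_C_pi \<pi> (G\<lparr>carrier := normalizer G (H <#>\<^bsub>G\<^esub> A)\<rparr>)"
    using core[OF assms(2,4,6) case1(1,2)[OF assms(2,6,5)]] case1(3)[OF assms(2,6,5)] by blast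
  show "has_C_pi \<pi> (G\<lparr>carrier := normalizer G (H \<inter> A)\<rparr>)"
    using core[OF assms(2,4,6) case2(1,2)[OF assms(2,6,5)]] case2(3)[OF assms(2,6,5)] by blast
qed

end
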